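(* Let $k\ge 2$ and let $m_1<m_2<\dots<m_k$ be positive integers. Then the complete $k$-partite graph $K_{m_1,m_2,\dots,m_k}$ satisfies $IDI(K_{m_1,m_2,\dots,m_k})=m_k$.
   Context: $K_{m_1,\dots,m_k}$ is the complete $k$-partite graph whose parts have sizes $m_1,\dots,m_k$. For a finite simple connected graph $G=(V,E)$ with diameter $d$, a rank assignment is a function $f:V\to\mathbb{R}$; under $f$, the string of a vertex $v$ is the $d$-vector whose $i$-th coordinate is the sum of $f(w)$ over all vertices $w$ with $d(v,w)=i$. The ID-index $IDI(G)$ is the minimum $k$ such that there exists $f:V\to\mathbb{R}$ with $|f(V)|=k$ under which all vertices have distinct strings. *)

theory Defs
  imports Complex_Main
begin

text \<open>A finite simple graph is given by a vertex set V and a symmetric,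
irreflexive adjacency relation E (only its restriction to V matters).\<close>

definition is_walk :: "'a set \<Rightarrow> ('a \<Rightarrow> 'a \<Rightarrow> bool) \<Rightarrow> 'a list \<Rightarrow> bool" where
  "is_walk V E p \<longleftrightarrow> p \<noteq> [] \<and> set p \<subseteq> V \<and>
     (\<forall>i. Suc i < length p \<longrightarrow> E (p ! i) (p ! Suc i))"

definition gdist :: "'a set \<Rightarrow> ('a \<Rightarrow> 'a \<Rightarrow> bool) \<Rightarrow> 'a \<Rightarrow> 'a \<Rightarrow> nat" where
  "gdist V E u v = (LEAST n. \<exists>p. is_walk V E p \<and> hd p = u \<and> last p = v \<and> length p = Suc n)"

definition gdiam :: "'a set \<Rightarrow> ('a \<Rightarrow> 'a \<Rightarrow> bool) \<Rightarrow> nat" where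
  "gdiam V E = Max {gdist V E u v | u v. u \<in> V \<and> v \<in> V}"

text \<open>The string of v under the rank assignment f: the d-vector whose i-th
coordinate (i = 1..d) is the sum of f(w) over vertices w at distance i from v.\<close>
definition vstring :: "'a set \<Rightarrow> ('a \<Rightarrow> 'a \<Rightarrow> bool) \<Rightarrow> ('a \<Rightarrow> real) \<Rightarrow> 'a \<Rightarrow> real list" where
  "vstring V E f v = map (\<lambda>i. \<Sum>w\<in>{w\<in>V. gdist V E v w = i}. f w) [1..<Suc (gdiam V E)]"

definition IDI :: "'a set \<Rightarrow> ('a \<Rightarrow> 'a \<Rightarrow> bool) \<Rightarrow> nat" where
  "IDI V E = (LEAST k. \<exists>f :: 'a \<Rightarrow> real. card (f ` V) = k \<and> inj_on (vstring V E f) V)"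

text \<open>Complete k-partite graph K_{m_1,...,m_k}: vertex (i,j) is the j-th vertex
(j < m i) of part i (1 \<le> i \<le> k); two vertices are adjacent iff in different parts.\<close>
definition multipartite_V :: "nat \<Rightarrow> (nat \<Rightarrow> nat) \<Rightarrow> (nat \<times> nat) set" where
  "multipartite_V k m = {(i, j). 1 \<le> i \<and> i \<le> k \<and> j < m i}"

definition multipartite_E :: "(nat \<times> nat) \<Rightarrow> (nat \<times> nat) \<Rightarrow> bool" where
  "multipartite_E x y \<longleftrightarrow> fst x \<noteq> fst y"

end

theory Submission
  imports Defs
begin

lemma gdist_le:
  assumes "is_walk V E p" "hd p = u" "last p = v" "length p = Suc n"
  shows "gdist V E u v \<le> n"
  unfolding gdist_def by (rule Least_le) (use assms in blast)

lemma gdist_walk: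
  assumes "is_walk V E p" "hd p = u" "last p = v"
  shows "\<exists>q. is_walk V E q \<and> hd q = u \<and> last q = v \<and> length q = Suc (gdist V E u v)"
proof -
  from assms have "\<exists>p. is_walk V E p \<and> hd p = u \<and> last p = v \<and> length p = Suc (length p - 1)"
    by (auto simp: is_walk_def)
  then have ex: "\<exists>n. \<exists>p. is_walk V E p \<and> hd p = u \<and> last p = v \<and> length p = Suc n" by blast
  show ?thesis unfolding gdist_def by (rule LeastI_ex[OF ex])
qed

locale mp =
  fixes k :: nat and m :: "nat \<Rightarrow> nat"
  assumes k2: "k \<ge> 2"
    and mpos: "\<And>i. 1 \<le> i \<Longrightarrow> i \<le> k \<Longrightarrow> m i > 0"
    and minc: "\<And>i. 1 \<le> i \<Longrightarrow> i < k \<Longrightarrow> m i < m (Suc i)"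
begin

abbreviation "V \<equiv> multipartite_V k m"
abbreviation "E \<equiv> multipartite_E"

lemma V_eq: "V = Sigma {1..k} (\<lambda>i. {..<m i})"
  by (auto simp: multipartite_V_def)

lemma finV: "finite V" unfolding V_eq by auto

lemma mmono: "1 \<le> i \<Longrightarrow> i < j \<Longrightarrow> j \<le> k \<Longrightarrow> m i < m j"
proof (induction j rule: less_induct)
  case (less j)
  then obtain j' where j: "j = Suc j'" by (cases j) auto
  show ?case
  proof (cases "i = j'")
    case True then show ?thesis using minc less j by auto
  next
    case False
    then have "m i < m j'" using less j by auto
    also have "m j' < m j" using minc less j False by auto
    finally show ?thesis .
  qed
qed

lemma mle: "1 \<le> i \<Longrightarrow> i \<le> k \<Longrightarrow> m i \<le> m k"
  using mmono[of i k] by (cases "i = k") auto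

lemma dist0: "u \<in> V \<Longrightarrow> gdist V E u u = 0"
  using gdist_le[of V E "[u]" u u 0] by (auto simp: is_walk_def)

lemma dist1: assumes "u \<in> V" "v \<in> V" "fst u \<noteq> fst v" shows "gdist V E u v = 1"
proof -
  have w: "is_walk V E [u,v]" using assms
    by (auto simp: is_walk_def multipartite_E_def less_Suc_eq)
  have le: "gdist V E u v \<le> 1" using gdist_le[OF w] by auto
  obtain q where q: "is_walk V E q" "hd q = u" "last q = v" "length q = Suc (gdist V E u v)"
    using gdist_walk[OF w, of u v, simplified] by blast
  have "gdist V E u v \<noteq> 0"
  proof
    assume "gdist V E u v = 0"
    then obtain x where "q = [x]" using q(4) by (cases q) auto
    then show False using q assms by auto
  qed
  then show ?thesis using le by auto
qed

lemma dist2: assumes "u \<in> V" "v \<in> V" "fst u = fst v" "u \<noteq> v" shows "gdist V E u v = 2"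
proof -
  obtain i a b where u: "u = (i,a)" and v: "v = (i,b)" using assms(3) by (cases u, cases v) auto
  define i' where "i' = (if i = 1 then 2 else 1::nat)"
  have "1 \<le> i'" "i' \<le> k" "i' \<noteq> i" using k2 by (auto simp: i'_def)
  then have wV: "(i',0) \<in> V" using mpos by (auto simp: multipartite_V_def)
  have w: "is_walk V E [u,(i',0),v]" using assms wV \<open>i' \<noteq> i\<close> u v
    by (auto simp: is_walk_def multipartite_E_def less_Suc_eq nth_Cons split: nat.splits)
  have le: "gdist V E u v \<le> 2" using gdist_le[OF w] by auto
  obtain q where q: "is_walk V E q" "hd q = u" "last q = v" "length q = Suc (gdist V E u v)"
    using gdist_walk[OF w, of u v, simplified] by blast
  have "gdist V E u v \<noteq> 0"
  proof
    assume "gdist V E u v = 0"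
    then obtain x where "q = [x]" using q(4) by (cases q) auto
    then show False using q assms by auto
  qed
  moreover have "gdist V E u v \<noteq> 1"
  proof
    assume "gdist V E u v = 1"
    then obtain x y where qq: "q = [x,y]" using q(4)
      by (cases q; cases "tl q") auto
    then have "E u v" using q(1,2,3) by (auto simp: is_walk_def)
    then show False using assms(3) by (auto simp: multipartite_E_def)
  qed
  ultimately show ?thesis using le by auto
qed

lemma diam: "gdiam V E = 2"
proof -
  have mk: "m k \<ge> 2"
  proof -
    have a: "1 \<le> k-1" "k-1 < k" "k - 1 \<le> k" using k2 by auto
    have "m (k-1) < m k" "0 < m (k-1)" using mmono[OF a(1,2) order.refl] mpos[OF a(1,3)] by auto
    then show ?thesis by linarith
  qed
  let ?S = "{gdist V E u v | u v. u \<in> V \<and> v \<in> V}"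
  have sub: "?S \<subseteq> {0,1,2}"
  proof
    fix x assume "x \<in> ?S"
    then obtain u v where "x = gdist V E u v" "u \<in> V" "v \<in> V" by blast
    then show "x \<in> {0,1,2}"
    proof (cases "u = v")
      case True then show ?thesis using dist0 \<open>x = _\<close> \<open>u \<in> V\<close> by simp
    next
      case False then show ?thesis using dist1[OF \<open>u \<in> V\<close> \<open>v \<in> V\<close>] dist2[OF \<open>u \<in> V\<close> \<open>v \<in> V\<close>] \<open>x = _\<close>
        by (cases "fst u = fst v") simp_all
    qed
  qed
  have "(k,0) \<in> V" "(k,1) \<in> V" using mk k2 by (auto simp: multipartite_V_def)
  then have mem: "2 \<in> ?S" using dist2[of "(k,0)" "(k,1)"] by force
  have fin: "finite ?S" using sub finite_subset by blast
  have le: "\<And>y. y \<in> ?S \<Longrightarrow> y \<le> 2"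
  proof -
    fix y assume "y \<in> ?S" then have "y \<in> {0,1,2}" by (rule subsetD[OF sub])
    then show "y \<le> 2" by auto
  qed
  show ?thesis unfolding gdiam_def by (rule Max_eqI[OF fin le mem])
qed

lemma gd: "u \<in> V \<Longrightarrow> v \<in> V \<Longrightarrow> gdist V E u v = (if u = v then 0 else if fst u = fst v then 2 else 1)"
  using dist0 dist1 dist2 by auto

lemma D1: assumes "v \<in> V" shows "{w\<in>V. gdist V E v w = 1} = {w\<in>V. fst w \<noteq> fst v}"
proof (rule Collect_cong)
  fix w show "(w \<in> V \<and> gdist V E v w = 1) = (w \<in> V \<and> fst w \<noteq> fst v)"
    using gd[OF assms, of w] by (cases "v = w"; cases "fst v = fst w") auto
qed

lemma D2: assumes "v \<in> V" shows "{w\<in>V. gdist V E v w = 2} = {w\<in>V. fst w = fst v \<and> w \<noteq> v}"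
proof (rule Collect_cong)
  fix w show "(w \<in> V \<and> gdist V E v w = 2) = (w \<in> V \<and> fst w = fst v \<and> w \<noteq> v)"
    using gd[OF assms, of w] by (cases "v = w"; cases "fst v = fst w") auto
qed

lemma vstr: "v \<in> V \<Longrightarrow> vstring V E f v =
   [\<Sum>w\<in>{w\<in>V. fst w \<noteq> fst v}. f w, \<Sum>w\<in>{w\<in>V. fst w = fst v \<and> w \<noteq> v}. f w]"
  unfolding vstring_def diam using D1 D2 by (simp add: numeral_2_eq_2 upt_rec)

lemma lower:
  assumes "inj_on (vstring V E f) V"
  shows "m k \<le> card (f ` V)"
proof -
  let ?P = "(\<lambda>j. (k,j)) ` {..<m k}"
  have PV: "?P \<subseteq> V" using k2 by (auto simp: multipartite_V_def)
  have "inj_on f ?P"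
  proof (rule inj_onI)
    fix x y assume xy: "x \<in> ?P" "y \<in> ?P" "f x = f y"
    have fin: "finite {w\<in>V. fst w = k}" using finV by auto
    have "vstring V E f x = vstring V E f y"
    proof -
      have e: "{w\<in>V. fst w = k \<and> w \<noteq> z} = {w\<in>V. fst w = k} - {z}" for z by auto
      have "\<And>z. z \<in> ?P \<Longrightarrow> (\<Sum>w\<in>{w\<in>V. fst w = k \<and> w \<noteq> z}. f w) = (\<Sum>w\<in>{w\<in>V. fst w = k}. f w) - f z"
        unfolding e using fin PV by (subst sum_diff1) auto
      moreover have "x \<in> V" "y \<in> V" "fst x = k" "fst y = k" using xy PV by auto
      ultimately show ?thesis using vstr[of x f] vstr[of y f] xy by simp
    qed
    then show "x = y" using assms xy PV by (auto dest: inj_onD)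
  qed
  then have "card (f ` ?P) = m k" by (simp add: card_image inj_on_def)
  moreover have "card (f ` ?P) \<le> card (f ` V)"
    using PV finV by (intro card_mono) auto
  ultimately show ?thesis by simp
qed

lemma gauss: "(\<Sum>j<n. real j) = real n * (real n - 1) / 2"
  by (induction n) (auto simp: field_simps)

lemma upper:
  "\<exists>f. card (f ` V) = m k \<and> inj_on (vstring V E f) V"
proof -
  define f where "f = (\<lambda>x::nat\<times>nat. real (snd x))"
  have img: "f ` V = real ` {..<m k}"
  proof
    show "f ` V \<subseteq> real ` {..<m k}"
      using mle by (force simp: f_def multipartite_V_def)
    show "real ` {..<m k} \<subseteq> f ` V"
    proof
      fix x assume "x \<in> real ` {..<m k}"
      then obtain j where "j < m k" "x = real j" by auto
      then have "(k,j) \<in> V" "f (k,j) = x" using k2 by (auto simp: multipartite_V_def f_def)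
      then show "x \<in> f ` V" by force
    qed
  qed
  have card: "card (f ` V) = m k" unfolding img by (simp add: card_image)
  have partsum: "(\<Sum>w\<in>{w\<in>V. fst w = i}. f w) = real (m i) * (real (m i) - 1) / 2"
    if "1 \<le> i" "i \<le> k" for i
  proof -
    have "{w\<in>V. fst w = i} = (\<lambda>j. (i,j)) ` {..<m i}" using that
      by (auto simp: multipartite_V_def)
    then have "(\<Sum>w\<in>{w\<in>V. fst w = i}. f w) = (\<Sum>j<m i. real j)"
      by (simp add: sum.reindex inj_on_def f_def)
    then show ?thesis by (simp add: gauss)
  qed
  have fin: "finite {w\<in>V. fst w = i}" for i using finV by auto
  have s1: "(\<Sum>w\<in>{w\<in>V. fst w \<noteq> i}. f w) = (\<Sum>w\<in>V. f w) - (\<Sum>w\<in>{w\<in>V. fst w = i}. f w)" for i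
  proof -
    have "{w\<in>V. fst w \<noteq> i} = V - {w\<in>V. fst w = i}" by auto
    then show ?thesis using finV by (simp add: sum_diff)
  qed
  have s2: "(\<Sum>w\<in>{w\<in>V. fst w = fst v \<and> w \<noteq> v}. f w) = (\<Sum>w\<in>{w\<in>V. fst w = fst v}. f w) - f v"
    if "v \<in> V" for v
  proof -
    have e: "{w\<in>V. fst w = fst v \<and> w \<noteq> v} = {w\<in>V. fst w = fst v} - {v}" by auto
    show ?thesis unfolding e using fin that by (subst sum_diff1) auto
  qed
  have "inj_on (vstring V E f) V"
  proof (rule inj_onI)
    fix x y assume x: "x \<in> V" and y: "y \<in> V" and eq: "vstring V E f x = vstring V E f y"
    obtain i a where xi: "x = (i,a)" by (cases x)
    obtain i' b where yi: "y = (i',b)" by (cases y)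
    have ii: "1 \<le> i" "i \<le> k" "1 \<le> i'" "i' \<le> k" using x y xi yi by (auto simp: multipartite_V_def)
    from eq have e1: "(\<Sum>w\<in>{w\<in>V. fst w \<noteq> i}. f w) = (\<Sum>w\<in>{w\<in>V. fst w \<noteq> i'}. f w)"
      and e2: "(\<Sum>w\<in>{w\<in>V. fst w = i \<and> w \<noteq> x}. f w) = (\<Sum>w\<in>{w\<in>V. fst w = i' \<and> w \<noteq> y}. f w)"
      using x y xi yi by (auto simp: vstr)
    have "i = i'"
    proof (rule ccontr)
      assume ne: "i \<noteq> i'"
      from e1 have eqg: "real (m i) * (real (m i) - 1) / 2 = real (m i') * (real (m i') - 1) / 2"
        unfolding s1 using partsum ii by simp
      have strict: "real (m i) * (real (m i) - 1) < real (m i') * (real (m i') - 1)"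
        if "1 \<le> i" "i < i'" "i' \<le> k" for i i'
      proof -
        have "m i < m i'" "m i > 0" using mmono mpos that by auto
        then have "real (m i) < real (m i')" "real (m i) - 1 < real (m i') - 1" "0 \<le> real (m i) - 1"
          by auto
        then show ?thesis by (intro mult_strict_mono) auto
      qed
      from ne have "i < i' \<or> i' < i" by arith
      then show False
      proof
        assume "i < i'"
        then show False using strict[of i i'] ii eqg by simp
      next
        assume "i' < i"
        then show False using strict[of i' i] ii eqg by simp
      qed
    qed
    then have "f x = f y" using e2 s2[OF x] s2[OF y] xi yi by simp
    then show "x = y" using xi yi \<open>i = i'\<close> by (simp add: f_def)
  qed
  then show ?thesis using card by blast
qed

end

theorem mainTheorem12:
  fixes k :: nat and m :: "nat \<Rightarrow> nat"
  assumes "k \<ge> 2"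
    and "\<And>i. 1 \<le> i \<Longrightarrow> i \<le> k \<Longrightarrow> m i > 0"
    and "\<And>i. 1 \<le> i \<Longrightarrow> i < k \<Longrightarrow> m i < m (Suc i)"
  shows "IDI (multipartite_V k m) multipartite_E = m k"
proof -
  interpret mp k m using assms by unfold_locales auto
  show ?thesis unfolding IDI_def
    by (rule Least_equality) (use upper lower in auto)
qed

end
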